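(* Let $F(x,y)=(f(x,y),x,y)$ be a germ at $o=(0,0)$ of a $C^3$ map into $\mathbf{R}^3_1$ with $f(0,0)=0$, $f_x(0,0)=0$, $f_y(0,0)=1$, such that the set $\{B_F\neq 0\}$ is open and dense in the domain and $A_F-\varphi B_F^2\equiv0$ for some $C^1$ function germ $\varphi$ at $o$. Then the light-like point $o$ is not an isolated point of the set of light-like points $\{B_F=0\}$.
   Context: $\mathbf{R}^3_1$ is Lorentz–Minkowski 3-space with coordinates $(t,x,y)$ and inner product $-dt^2+dx^2+dy^2$. $B_F:=1-f_x^2-f_y^2$, $A_F:=(1-f_x^2)f_{yy}+2f_xf_yf_{xy}+(1-f_y^2)f_{xx}$. A point $p$ is light-like if $B_F(p)=0$. *)

theory Defs
  imports "HOL-Analysis.Analysis"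
begin

definition px :: "(real \<times> real \<Rightarrow> real) \<Rightarrow> real \<times> real \<Rightarrow> real" where
  "px f = (\<lambda>(x, y). deriv (\<lambda>t. f (t, y)) x)"

definition py :: "(real \<times> real \<Rightarrow> real) \<Rightarrow> real \<times> real \<Rightarrow> real" where
  "py f = (\<lambda>(x, y). deriv (\<lambda>t. f (x, t)) y)"

fun Ck :: "nat \<Rightarrow> (real \<times> real \<Rightarrow> real) \<Rightarrow> (real \<times> real) set \<Rightarrow> bool" where
  "Ck 0 f U = continuous_on U f"
| "Ck (Suc k) f U = (continuous_on U f \<and> (\<forall>p\<in>U. f differentiable (at p))
      \<and> Ck k (px f) U \<and> Ck k (py f) U)"

definition BF :: "(real \<times> real \<Rightarrow> real) \<Rightarrow> real \<times> real \<Rightarrow> real" where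
  "BF f p = 1 - (px f p)^2 - (py f p)^2"

definition AF :: "(real \<times> real \<Rightarrow> real) \<Rightarrow> real \<times> real \<Rightarrow> real" where
  "AF f p = (1 - (px f p)^2) * py (py f) p + 2 * px f p * py f p * py (px f) p
            + (1 - (py f p)^2) * px (px f) p"

end

theory Submission
  imports Defs
begin


lemma partial_x:
  assumes "g differentiable (at (x, y))"
  shows "((\<lambda>t. g (t, y)) has_real_derivative px g (x, y)) (at x)"
proof -
  have "(\<lambda>t. g (t, y)) = g \<circ> (\<lambda>t. (t, y))" by auto
  moreover have "(\<lambda>t. (t::real, y)) differentiable (at x)"
    by (auto intro!: derivative_intros simp: differentiable_def)
  ultimately have "(\<lambda>t. g (t, y)) differentiable (at x)"
    using assms by (metis differentiable_chain_at)
  then show ?thesis unfolding px_def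
    by (simp add: DERIV_deriv_iff_real_differentiable)
qed

lemma partial_y:
  assumes "g differentiable (at (x, y))"
  shows "((\<lambda>t. g (x, t)) has_real_derivative py g (x, y)) (at y)"
proof -
  have "(\<lambda>t. g (x, t)) = g \<circ> (\<lambda>t. (x, t))" by auto
  moreover have "(\<lambda>t. (x::real, t)) differentiable (at y)"
    by (auto intro!: derivative_intros simp: differentiable_def)
  ultimately have "(\<lambda>t. g (x, t)) differentiable (at y)"
    using assms by (metis differentiable_chain_at)
  then show ?thesis unfolding py_def
    by (simp add: DERIV_deriv_iff_real_differentiable)
qed

lemma frechet_partials:
  assumes "g differentiable (at p)"
  shows "(g has_derivative (\<lambda>v. fst v * px g p + snd v * py g p)) (at p)"
proof -
  obtain x y where p: "p = (x, y)" by (cases p)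
  from assms obtain D where D: "(g has_derivative D) (at p)" by (auto simp: differentiable_def)
  then have lin: "linear D" using has_derivative_linear by blast
  have "((\<lambda>t. (t::real, y)) has_derivative (\<lambda>t. (t, 0))) (at x)"
    by (auto intro!: derivative_eq_intros)
  then have "((g \<circ> (\<lambda>t. (t, y))) has_derivative (D \<circ> (\<lambda>t. (t, 0)))) (at x)"
    using D p by (auto intro: diff_chain_at)
  moreover have "(D \<circ> (\<lambda>t. (t, 0))) = (\<lambda>t. D (1, 0) * t)"
  proof
    fix t :: real
    have "D (t *\<^sub>R (1, 0)) = t *\<^sub>R D (1, 0)" using lin by (rule linear_scale)
    then show "(D \<circ> (\<lambda>t. (t, 0))) t = D (1, 0) * t" by (simp add: mult.commute)
  qed
  ultimately have "((\<lambda>t. g (t, y)) has_real_derivative D (1, 0)) (at x)"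
    by (simp add: has_field_derivative_def o_def)
  moreover have "((\<lambda>t. g (t, y)) has_real_derivative px g p) (at x)"
    using partial_x assms p by blast
  ultimately have dx: "D (1, 0) = px g p" using DERIV_unique by blast
  have "((\<lambda>t. (x::real, t)) has_derivative (\<lambda>t. (0, t))) (at y)"
    by (auto intro!: derivative_eq_intros)
  then have "((g \<circ> (\<lambda>t. (x, t))) has_derivative (D \<circ> (\<lambda>t. (0, t)))) (at y)"
    using D p by (auto intro: diff_chain_at)
  moreover have "(D \<circ> (\<lambda>t. (0, t))) = (\<lambda>t. D (0, 1) * t)"
  proof
    fix t :: real
    have "D (t *\<^sub>R (0, 1)) = t *\<^sub>R D (0, 1)" using lin by (rule linear_scale)
    then show "(D \<circ> (\<lambda>t. (0, t))) t = D (0, 1) * t" by (simp add: mult.commute)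
  qed
  ultimately have "((\<lambda>t. g (x, t)) has_real_derivative D (0, 1)) (at y)"
    by (simp add: has_field_derivative_def o_def)
  moreover have "((\<lambda>t. g (x, t)) has_real_derivative py g p) (at y)"
    using partial_y assms p by blast
  ultimately have dy: "D (0, 1) = py g p" using DERIV_unique by blast
  have "D = (\<lambda>v. fst v * px g p + snd v * py g p)"
  proof
    fix v :: "real \<times> real"
    have "v = fst v *\<^sub>R (1, 0) + snd v *\<^sub>R (0, 1)" by (cases v) simp
    then have "D v = fst v *\<^sub>R D (1,0) + snd v *\<^sub>R D (0,1)"
      using lin by (metis linear_add linear_scale)
    then show "D v = fst v * px g p + snd v * py g p" using dx dy by simp
  qed
  then show ?thesis using D by simp
qed


lemma box_in_ball:
  fixes x y s t h \<rho> :: real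
  assumes "\<bar>s - x\<bar> \<le> h" "\<bar>t - y\<bar> \<le> h" "2 * h < \<rho>"
  shows "(s, t) \<in> ball (x, y) \<rho>"
proof -
  have "dist (x, y) (s, t) = sqrt ((x - s)^2 + (y - t)^2)"
    by (simp add: dist_Pair_Pair dist_real_def)
  also have "\<dots> \<le> \<bar>x - s\<bar> + \<bar>y - t\<bar>"
    by (rule real_sqrt_le_iff[THEN iffD2, of _ "(\<bar>x - s\<bar> + \<bar>y - t\<bar>)^2", simplified])
       (simp_all add: power2_eq_square algebra_simps abs_mult_self_eq mult_nonneg_nonneg)
  finally show ?thesis using assms by (simp add: abs_minus_commute)
qed

lemma schwarz:
  fixes f :: "real \<times> real \<Rightarrow> real"
  assumes U: "open U" and pU: "p \<in> U"
    and df: "\<forall>q\<in>U. f differentiable (at q)"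
    and dP: "\<forall>q\<in>U. px f differentiable (at q)"
    and dQ: "\<forall>q\<in>U. py f differentiable (at q)"
    and cPy: "continuous_on U (py (px f))"
    and cQx: "continuous_on U (px (py f))"
  shows "py (px f) p = px (py f) p"
proof (rule ccontr)
  assume ne: "py (px f) p \<noteq> px (py f) p"
  define d where "d = \<bar>py (px f) p - px (py f) p\<bar>"
  have d: "d > 0" using ne by (simp add: d_def)
  obtain x y where p: "p = (x, y)" by (cases p)
  obtain \<rho>0 where r0: "\<rho>0 > 0" "ball p \<rho>0 \<subseteq> U" using U pU open_contains_ball by blast
  have "isCont (py (px f)) p" using cPy U pU continuous_on_eq_continuous_at by blast
  then obtain \<rho>1 where r1: "\<rho>1 > 0" "\<forall>q. dist q p < \<rho>1 \<longrightarrow> dist (py (px f) q) (py (px f) p) < d/2"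
    using d continuous_at_eps_delta[THEN iffD1] by (metis half_gt_zero)
  have "isCont (px (py f)) p" using cQx U pU continuous_on_eq_continuous_at by blast
  then obtain \<rho>2 where r2: "\<rho>2 > 0" "\<forall>q. dist q p < \<rho>2 \<longrightarrow> dist (px (py f) q) (px (py f) p) < d/2"
    using d continuous_at_eps_delta[THEN iffD1] by (metis half_gt_zero)
  define \<rho> where "\<rho> = min \<rho>0 (min \<rho>1 \<rho>2)"
  have \<rho>: "\<rho> > 0" using r0 r1 r2 by (simp add: \<rho>_def)
  define h where "h = \<rho> / 4"
  have h: "h > 0" "2 * h < \<rho>" using \<rho> by (auto simp: h_def)
  have inbox: "(s, t) \<in> ball p \<rho>" if "x \<le> s" "s \<le> x + h" "y \<le> t" "t \<le> y + h" for s t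
    using box_in_ball[of s x h t y \<rho>] that h p by auto
  have inU: "(s, t) \<in> U" if "x \<le> s" "s \<le> x + h" "y \<le> t" "t \<le> y + h" for s t
    using inbox[OF that] r0 \<rho>_def by auto
  have close1: "\<bar>py (px f) (s, t) - py (px f) p\<bar> < d/2" if "x \<le> s" "s \<le> x + h" "y \<le> t" "t \<le> y + h" for s t
    using inbox[OF that] r1 \<rho>_def by (auto simp: dist_commute dist_real_def)
  have close2: "\<bar>px (py f) (s, t) - px (py f) p\<bar> < d/2" if "x \<le> s" "s \<le> x + h" "y \<le> t" "t \<le> y + h" for s t
    using inbox[OF that] r2 \<rho>_def by (auto simp: dist_commute dist_real_def)
  define u where "u = (\<lambda>s. f (s, y + h) - f (s, y))"
  have "\<forall>s. x \<le> s \<and> s \<le> x + h \<longrightarrow> DERIV u s :> px f (s, y + h) - px f (s, y)"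
    unfolding u_def using inU df h
    by (auto intro!: DERIV_diff partial_x)
  then have "\<exists>\<xi>. x < \<xi> \<and> \<xi> < x + h \<and> u (x + h) - u x = (x + h - x) * (px f (\<xi>, y + h) - px f (\<xi>, y))"
    using MVT2[of x "x + h" u "\<lambda>s. px f (s, y + h) - px f (s, y)"] h by auto
  then obtain \<xi> where xi: "x < \<xi>" "\<xi> < x + h" "u (x + h) - u x = (x + h - x) * (px f (\<xi>, y + h) - px f (\<xi>, y))" by blast
  have "\<forall>t. y \<le> t \<and> t \<le> y + h \<longrightarrow> DERIV (\<lambda>t. px f (\<xi>, t)) t :> py (px f) (\<xi>, t)"
    using inU dP xi by (auto intro!: partial_y)
  then have "\<exists>\<eta>. y < \<eta> \<and> \<eta> < y + h \<and> px f (\<xi>, y + h) - px f (\<xi>, y) = (y + h - y) * py (px f) (\<xi>, \<eta>)"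
    using MVT2[of y "y + h" "\<lambda>t. px f (\<xi>, t)" "\<lambda>t. py (px f) (\<xi>, t)"] h by auto
  then obtain \<eta> where eta: "y < \<eta>" "\<eta> < y + h" "px f (\<xi>, y + h) - px f (\<xi>, y) = (y + h - y) * py (px f) (\<xi>, \<eta>)" by blast
  define v where "v = (\<lambda>t. f (x + h, t) - f (x, t))"
  have "\<forall>t. y \<le> t \<and> t \<le> y + h \<longrightarrow> DERIV v t :> py f (x + h, t) - py f (x, t)"
    unfolding v_def using inU df h
    by (auto intro!: DERIV_diff partial_y)
  then have "\<exists>\<eta>'. y < \<eta>' \<and> \<eta>' < y + h \<and> v (y + h) - v y = (y + h - y) * (py f (x + h, \<eta>') - py f (x, \<eta>'))"
    using MVT2[of y "y + h" v "\<lambda>t. py f (x + h, t) - py f (x, t)"] h by auto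
  then obtain \<eta>' where eta': "y < \<eta>'" "\<eta>' < y + h" "v (y + h) - v y = (y + h - y) * (py f (x + h, \<eta>') - py f (x, \<eta>'))" by blast
  have "\<forall>s. x \<le> s \<and> s \<le> x + h \<longrightarrow> DERIV (\<lambda>s. py f (s, \<eta>')) s :> px (py f) (s, \<eta>')"
    using inU dQ eta' by (auto intro!: partial_x)
  then have "\<exists>\<xi>'. x < \<xi>' \<and> \<xi>' < x + h \<and> py f (x + h, \<eta>') - py f (x, \<eta>') = (x + h - x) * px (py f) (\<xi>', \<eta>')"
    using MVT2[of x "x + h" "\<lambda>s. py f (s, \<eta>')" "\<lambda>s. px (py f) (s, \<eta>')"] h by auto
  then obtain \<xi>' where xi': "x < \<xi>'" "\<xi>' < x + h" "py f (x + h, \<eta>') - py f (x, \<eta>') = (x + h - x) * px (py f) (\<xi>', \<eta>')" by blast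
  have "u (x + h) - u x = v (y + h) - v y" by (simp add: u_def v_def)
  then have "h * (h * py (px f) (\<xi>, \<eta>)) = h * (h * px (py f) (\<xi>', \<eta>'))"
    using xi eta eta' xi' by simp
  then have eq: "py (px f) (\<xi>, \<eta>) = px (py f) (\<xi>', \<eta>')" using h by simp
  have "\<bar>py (px f) (\<xi>, \<eta>) - py (px f) p\<bar> < d/2" using close1 xi eta by auto
  moreover have "\<bar>px (py f) (\<xi>', \<eta>') - px (py f) p\<bar> < d/2" using close2 xi' eta' by auto
  ultimately show False using eq d_def by linarith
qed


lemma abs_fst_le: "\<bar>fst (v::real \<times> real)\<bar> \<le> norm v"
proof -
  obtain a b where v: "v = (a, b)" by (cases v)
  have "\<bar>a\<bar> = sqrt (a^2)" by simp
  also have "\<dots> \<le> sqrt (a^2 + b^2)" by (simp add: real_sqrt_le_iff)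
  finally show ?thesis by (simp add: v norm_Pair)
qed

lemma abs_snd_le: "\<bar>snd (v::real \<times> real)\<bar> \<le> norm v"
proof -
  obtain a b where v: "v = (a, b)" by (cases v)
  have "\<bar>b\<bar> = sqrt (b^2)" by simp
  also have "\<dots> \<le> sqrt (a^2 + b^2)" by (simp add: real_sqrt_le_iff)
  finally show ?thesis by (simp add: v norm_Pair)
qed

lemma step_est:
  fixes W :: "real \<times> real \<Rightarrow> real \<times> real" and Bf Bx By c :: "real \<times> real \<Rightarrow> real"
  assumes h: "h > 0"
    and seg: "\<forall>s\<in>{0..h}. z + s *\<^sub>R W z \<in> K"
    and der: "\<forall>q\<in>K. (Bf has_derivative (\<lambda>v. fst v * Bx q + snd v * By q)) (at q)"
    and key: "\<forall>q\<in>K. fst (W q) * Bx q + snd (W q) * By q = c q * Bf q"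
    and bc: "\<forall>q\<in>K. \<bar>c q\<bar> \<le> Kc"
    and bg: "\<forall>q\<in>K. \<bar>Bx q\<bar> + \<bar>By q\<bar> \<le> G"
    and uc: "\<forall>s\<in>{0..h}. norm (W (z + s *\<^sub>R W z) - W z) \<le> \<epsilon> \<and> \<bar>Bf (z + s *\<^sub>R W z) - Bf z\<bar> \<le> \<epsilon>"
  shows "\<bar>Bf (z + h *\<^sub>R W z) - Bf z\<bar> \<le> h * (Kc * (\<bar>Bf z\<bar> + \<epsilon>) + G * \<epsilon>)"
proof -
  define w where "w = W z"
  define g where "g = (\<lambda>s. Bf (z + s *\<^sub>R w))"
  define g' where "g' = (\<lambda>s. fst w * Bx (z + s *\<^sub>R w) + snd w * By (z + s *\<^sub>R w))"
  have "DERIV g s :> g' s" if "0 \<le> s" "s \<le> h" for s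
  proof -
    have q: "z + s *\<^sub>R w \<in> K" using seg that w_def by auto
    have 1: "((\<lambda>s. z + s *\<^sub>R w) has_derivative (\<lambda>s. s *\<^sub>R w)) (at s)"
      by (auto intro!: derivative_eq_intros)
    have "((Bf \<circ> (\<lambda>s. z + s *\<^sub>R w)) has_derivative
       ((\<lambda>v. fst v * Bx (z + s *\<^sub>R w) + snd v * By (z + s *\<^sub>R w)) \<circ> (\<lambda>s. s *\<^sub>R w))) (at s)"
      using diff_chain_at[OF 1] der q by blast
    moreover have "((\<lambda>v. fst v * Bx (z + s *\<^sub>R w) + snd v * By (z + s *\<^sub>R w)) \<circ> (\<lambda>s. s *\<^sub>R w))
       = (*) (g' s)"
      by (auto simp: g'_def algebra_simps)
    ultimately show ?thesis by (simp add: has_field_derivative_def g_def o_def)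
  qed
  then have "\<exists>s. 0 < s \<and> s < h \<and> g h - g 0 = (h - 0) * g' s"
    using MVT2[of 0 h g g'] h by auto
  then obtain s where s: "0 < s" "s < h" "g h - g 0 = h * g' s" by auto
  define q where "q = z + s *\<^sub>R w"
  have qK: "q \<in> K" using seg s q_def w_def by auto
  have u1: "norm (W q - w) \<le> \<epsilon>" and u2: "\<bar>Bf q - Bf z\<bar> \<le> \<epsilon>"
    using uc s q_def w_def by auto
  have "g' s = c q * Bf q + (fst (w - W q) * Bx q + snd (w - W q) * By q)"
    using key qK by (simp add: g'_def q_def algebra_simps)
  moreover have "\<bar>c q * Bf q\<bar> \<le> Kc * (\<bar>Bf z\<bar> + \<epsilon>)"
  proof -
    have "\<bar>Bf q\<bar> \<le> \<bar>Bf z\<bar> + \<epsilon>" using u2 by linarith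
    moreover have cq: "\<bar>c q\<bar> \<le> Kc" using bc qK by auto
    ultimately show ?thesis
      by (simp add: abs_mult mult_mono[of "\<bar>c q\<bar>" Kc "\<bar>Bf q\<bar>" "\<bar>Bf z\<bar> + \<epsilon>"])
  qed
  moreover have "\<bar>fst (w - W q) * Bx q + snd (w - W q) * By q\<bar> \<le> G * \<epsilon>"
  proof -
    have a: "\<bar>fst (w - W q)\<bar> \<le> \<epsilon>" "\<bar>snd (w - W q)\<bar> \<le> \<epsilon>"
      using u1 abs_fst_le[of "w - W q"] abs_snd_le[of "w - W q"] by (auto simp: norm_minus_commute)
    have e0: "\<epsilon> \<ge> 0" using a(1) by linarith
    have "\<bar>fst (w - W q) * Bx q + snd (w - W q) * By q\<bar> \<le> \<bar>fst (w - W q)\<bar> * \<bar>Bx q\<bar> + \<bar>snd (w - W q)\<bar> * \<bar>By q\<bar>"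
      by (metis abs_mult abs_triangle_ineq)
    also have "\<dots> \<le> \<epsilon> * \<bar>Bx q\<bar> + \<epsilon> * \<bar>By q\<bar>"
      using a by (intro add_mono mult_right_mono) auto
    also have "\<dots> = \<epsilon> * (\<bar>Bx q\<bar> + \<bar>By q\<bar>)" by (simp add: distrib_left)
    also have "\<dots> \<le> \<epsilon> * G" using bg qK e0 by (intro mult_left_mono) auto
    also have "\<dots> = G * \<epsilon>" by simp
    finally show ?thesis .
  qed
  ultimately have "\<bar>g' s\<bar> \<le> Kc * (\<bar>Bf z\<bar> + \<epsilon>) + G * \<epsilon>" by linarith
  then have "\<bar>g h - g 0\<bar> \<le> h * (Kc * (\<bar>Bf z\<bar> + \<epsilon>) + G * \<epsilon>)"
    using s h by (simp add: abs_mult mult_left_mono)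
  then show ?thesis by (simp add: g_def w_def)
qed

lemma iter_est:
  fixes W :: "real \<times> real \<Rightarrow> real \<times> real" and Bf :: "real \<times> real \<Rightarrow> real"
  assumes h: "h > 0" and Kc: "Kc \<ge> 0" and C: "C \<ge> 0"
    and bW: "\<forall>z\<in>cball 0 r. norm (W z) \<le> 2 \<and> snd (W z) \<ge> 1/2"
    and st: "\<forall>z\<in>cball 0 r. z + h *\<^sub>R W z \<in> cball 0 r \<longrightarrow>
               \<bar>Bf (z + h *\<^sub>R W z) - Bf z\<bar> \<le> h * (Kc * \<bar>Bf z\<bar> + C)"
    and B0: "Bf 0 = 0"
    and n: "2 * real n * h \<le> r"
  shows "norm (((\<lambda>z. z + h *\<^sub>R W z) ^^ n) 0) \<le> 2 * real n * h
    \<and> snd (((\<lambda>z. z + h *\<^sub>R W z) ^^ n) 0) \<ge> real n * h / 2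
    \<and> \<bar>Bf (((\<lambda>z. z + h *\<^sub>R W z) ^^ n) 0)\<bar> \<le> real n * h * C * exp (Kc * real n * h)"
  using n
proof (induction n)
  case 0
  then show ?case using B0 by simp
next
  case (Suc n)
  define z where "z = ((\<lambda>z. z + h *\<^sub>R W z) ^^ n) 0"
  have pre: "2 * real n * h \<le> r" using Suc.prems h by (simp add: algebra_simps)
  have IH: "norm z \<le> 2 * real n * h" "snd z \<ge> real n * h / 2"
     "\<bar>Bf z\<bar> \<le> real n * h * C * exp (Kc * real n * h)"
  proof -
    show "norm z \<le> 2 * real n * h" "snd z \<ge> real n * h / 2"
     "\<bar>Bf z\<bar> \<le> real n * h * C * exp (Kc * real n * h)"
      using Suc.IH[OF pre] by (auto simp: z_def)
  qed
  have zK: "z \<in> cball 0 r" using IH(1) pre by simp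
  have wb: "norm (W z) \<le> 2" "snd (W z) \<ge> 1/2" using bW zK by auto
  have nz: "norm (z + h *\<^sub>R W z) \<le> 2 * real (Suc n) * h"
  proof -
    have "norm (z + h *\<^sub>R W z) \<le> norm z + h * norm (W z)"
      using norm_triangle_ineq[of z "h *\<^sub>R W z"] h by simp
    also have "\<dots> \<le> 2 * real n * h + h * 2"
    proof -
      have "h * norm (W z) \<le> h * 2" using wb h by (intro mult_left_mono) auto
      then show ?thesis using IH(1) by linarith
    qed
    finally show ?thesis by (simp add: algebra_simps)
  qed
  have z'K: "z + h *\<^sub>R W z \<in> cball 0 r" using nz Suc.prems by simp
  have sz: "snd (z + h *\<^sub>R W z) \<ge> real (Suc n) * h / 2"
  proof -
    have "h * (1/2) \<le> h * snd (W z)" using wb h by (simp add: mult_left_mono)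
    then show ?thesis using IH(2) by (simp add: algebra_simps)
  qed
  have stp: "\<bar>Bf (z + h *\<^sub>R W z) - Bf z\<bar> \<le> h * (Kc * \<bar>Bf z\<bar> + C)"
    using st zK z'K by blast
  define E where "E = real n * h * C * exp (Kc * real n * h)"
  have E0: "E \<ge> 0" using h C by (simp add: E_def)
  have "\<bar>Bf (z + h *\<^sub>R W z)\<bar> \<le> (1 + h * Kc) * \<bar>Bf z\<bar> + h * C"
    using stp by (simp add: algebra_simps)
  also have "\<dots> \<le> (1 + h * Kc) * E + h * C"
    using IH(3) h Kc by (simp add: E_def mult_left_mono)
  also have "\<dots> \<le> exp (h * Kc) * E + h * C * exp (Kc * real (Suc n) * h)"
  proof -
    have "(1 + h * Kc) * E \<le> exp (h * Kc) * E"
      using E0 by (simp add: mult_right_mono exp_ge_add_one_self)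
    moreover have "h * C \<le> h * C * exp (Kc * real (Suc n) * h)"
    proof -
      have e1: "1 \<le> exp (Kc * real (Suc n) * h)" using h Kc by simp
      then have "h * C * 1 \<le> h * C * exp (Kc * real (Suc n) * h)" using h C
        by (intro mult_left_mono) auto
      then show ?thesis by simp
    qed
    ultimately show ?thesis by linarith
  qed
  also have "exp (h * Kc) * E = real n * h * C * exp (Kc * real (Suc n) * h)"
    by (simp add: E_def algebra_simps exp_add[symmetric])
  also have "real n * h * C * exp (Kc * real (Suc n) * h) + h * C * exp (Kc * real (Suc n) * h)
     = real (Suc n) * h * C * exp (Kc * real (Suc n) * h)" by (simp add: algebra_simps)
  finally show ?case using nz sz by (simp add: z_def)
qed


lemma norm_pair_le: "norm ((a::real), (b::real)) \<le> \<bar>a\<bar> + \<bar>b\<bar>"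
proof -
  have "norm (a, b) = sqrt (a^2 + b^2)" by (simp add: norm_Pair)
  also have "\<dots> \<le> \<bar>a\<bar> + \<bar>b\<bar>"
    by (rule real_sqrt_le_iff[THEN iffD2, of _ "(\<bar>a\<bar> + \<bar>b\<bar>)^2", simplified])
       (simp_all add: power2_eq_square algebra_simps abs_mult_self_eq mult_nonneg_nonneg)
  finally show ?thesis .
qed

lemma cont_bound:
  fixes g :: "real \<times> real \<Rightarrow> real"
  assumes "compact K" "continuous_on K g"
  shows "\<exists>M. \<forall>x\<in>K. \<bar>g x\<bar> \<le> M"
proof -
  have "bounded (g ` K)" using assms compact_continuous_image compact_imp_bounded by blast
  then obtain a where "\<forall>y\<in>g ` K. norm y \<le> a" by (auto simp: bounded_iff)
  then show ?thesis by auto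
qed

lemma Ck3_unfold:
  assumes "Ck 3 f U"
  shows "\<forall>p\<in>U. f differentiable (at p)" "\<forall>p\<in>U. px f differentiable (at p)"
    "\<forall>p\<in>U. py f differentiable (at p)" "continuous_on U (px f)" "continuous_on U (py f)"
    "continuous_on U (px (px f))" "continuous_on U (py (px f))"
    "continuous_on U (px (py f))" "continuous_on U (py (py f))"
  using assms by (simp_all add: numeral_3_eq_3 numeral_2_eq_2)



lemma alg: fixes p q px py qx qy ph b :: real
  assumes "(1 - p^2) * qy + 2 * p * q * py + (1 - q^2) * px = ph * b^2"
   "b = 1 - p^2 - q^2" "qx = py"
  shows "p * (-2 * (p * px + q * qx)) + q * (-2 * (p * py + q * qy)) = (2 * (px + qy) - 2 * ph * b) * b"
  using assms by algebra

theorem corollary3p4: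
  fixes f \<phi> :: "real \<times> real \<Rightarrow> real" and U :: "(real \<times> real) set"
  assumes "open U" and "(0, 0) \<in> U"
    and "Ck 3 f U"
    and "Ck 1 \<phi> U"
    and "f (0, 0) = 0" and "px f (0, 0) = 0" and "py f (0, 0) = 1"
    and "U \<subseteq> closure {p \<in> U. BF f p \<noteq> 0}"
    and "\<forall>p\<in>U. AF f p - \<phi> p * (BF f p)^2 = 0"
  shows "(0, 0) \<in> closure ({p \<in> U. BF f p = 0} - {(0, 0)})"
proof (rule ccontr)
  assume nc: "(0, 0) \<notin> closure ({p \<in> U. BF f p = 0} - {(0, 0)})"
  have z0: "(0::real \<times> real) = (0, 0)" by (simp add: zero_prod_def)
  obtain e where e: "e > 0" "\<forall>y\<in>{p \<in> U. BF f p = 0} - {(0, 0)}. \<not> dist y (0, 0) < e"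
    using nc closure_approachable by blast
  define P where "P = px f"
  define Q where "Q = py f"
  define B where "B = BF f"
  define Bx where "Bx = (\<lambda>q. -2 * (P q * px P q + Q q * px Q q))"
  define By where "By = (\<lambda>q. -2 * (P q * py P q + Q q * py Q q))"
  define c where "c = (\<lambda>q. 2 * (px P q + py Q q) - 2 * \<phi> q * B q)"
  define W where "W = (\<lambda>q. (P q, Q q))"
  note ck = Ck3_unfold[OF assms(3), folded P_def Q_def]
  have c\<phi>: "continuous_on U \<phi>" using assms(4) by simp
  have Bdef: "B = (\<lambda>q. 1 - (P q)^2 - (Q q)^2)" by (auto simp: B_def BF_def P_def Q_def)
  have cB: "continuous_on U B" unfolding Bdef using ck by (intro continuous_intros) auto
  have sch: "\<forall>q\<in>U. py P q = px Q q"
    using schwarz[OF assms(1) _ ck(1) ck(2)[unfolded P_def] ck(3)[unfolded Q_def]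
        ck(7)[unfolded P_def] ck(8)[unfolded Q_def]] by (simp add: P_def Q_def)
  have key: "\<forall>q\<in>U. fst (W q) * Bx q + snd (W q) * By q = c q * B q"
  proof
    fix q assume q: "q \<in> U"
    have A: "AF f q = \<phi> q * (B q)^2" using assms(9) q by (simp add: B_def)
    have "(1 - (P q)^2) * py Q q + 2 * P q * Q q * py P q + (1 - (Q q)^2) * px P q = \<phi> q * (B q)^2"
      using A by (simp add: AF_def P_def Q_def)
    moreover have "B q = 1 - (P q)^2 - (Q q)^2" by (simp add: Bdef)
    moreover have "px Q q = py P q" using sch q by simp
    ultimately show "fst (W q) * Bx q + snd (W q) * By q = c q * B q"
      unfolding W_def Bx_def By_def c_def fst_conv snd_conv
      by (rule alg)
  qed
  have derB: "\<forall>q\<in>U. (B has_derivative (\<lambda>v. fst v * Bx q + snd v * By q)) (at q)"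
  proof
    fix q assume q: "q \<in> U"
    have hP: "(P has_derivative (\<lambda>v. fst v * px P q + snd v * py P q)) (at q)"
      using frechet_partials ck(2) q by blast
    have hQ: "(Q has_derivative (\<lambda>v. fst v * px Q q + snd v * py Q q)) (at q)"
      using frechet_partials ck(3) q by blast
    define DP where "DP = (\<lambda>v::real\<times>real. fst v * px P q + snd v * py P q)"
    define DQ where "DQ = (\<lambda>v::real\<times>real. fst v * px Q q + snd v * py Q q)"
    have d: "((\<lambda>q. 1 - P q * P q - Q q * Q q) has_derivative
       (\<lambda>v. 0 - (P q * DP v + DP v * P q) - (Q q * DQ v + DQ v * Q q))) (at q)"
      unfolding DP_def DQ_def
      by (intro has_derivative_diff has_derivative_const has_derivative_mult hP hQ)
    have eq: "(\<lambda>v. 0 - (P q * DP v + DP v * P q) - (Q q * DQ v + DQ v * Q q))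
      = (\<lambda>v. fst v * Bx q + snd v * By q)"
      by (rule ext) (simp add: DP_def DQ_def Bx_def By_def algebra_simps)
    have "((\<lambda>q. 1 - P q * P q - Q q * Q q) has_derivative (\<lambda>v. fst v * Bx q + snd v * By q)) (at q)"
      using d eq by simp
    then show "(B has_derivative (\<lambda>v. fst v * Bx q + snd v * By q)) (at q)"
      by (simp add: Bdef power2_eq_square)
  qed
  have cW: "continuous_on U W" unfolding W_def using ck by (intro continuous_intros) auto
  have cc: "continuous_on U c" unfolding c_def using ck c\<phi> cB by (intro continuous_intros) auto
  have cBx: "continuous_on U Bx" unfolding Bx_def using ck by (intro continuous_intros) auto
  have cBy: "continuous_on U By" unfolding By_def using ck by (intro continuous_intros) auto
  have P0: "P 0 = 0" using assms(6) z0 by (simp add: P_def)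
  have Q0: "Q 0 = 1" using assms(7) z0 by (simp add: Q_def)
  have B0: "B 0 = 0" using P0 Q0 by (simp add: Bdef)
  have U0: "0 \<in> U" using assms(2) z0 by simp
  obtain r0 where r0: "r0 > 0" "ball 0 r0 \<subseteq> U" using assms(1) U0 open_contains_ball by blast
  have "isCont P 0" using ck(4) assms(1) U0 continuous_on_eq_continuous_at by (auto simp: P_def)
  then obtain r1 where r1: "r1 > 0" "\<forall>q. dist q 0 < r1 \<longrightarrow> dist (P q) (P 0) < 1/2"
    using continuous_at_eps_delta[THEN iffD1] by (metis half_gt_zero zero_less_one)
  have "isCont Q 0" using ck(5) assms(1) U0 continuous_on_eq_continuous_at by (auto simp: Q_def)
  then obtain r2 where r2: "r2 > 0" "\<forall>q. dist q 0 < r2 \<longrightarrow> dist (Q q) (Q 0) < 1/2"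
    using continuous_at_eps_delta[THEN iffD1] by (metis half_gt_zero zero_less_one)
  define r where "r = min (min r0 r1) (min r2 e) / 2"
  have r: "r > 0" using r0 r1 r2 e by (simp add: r_def)
  define K where "K = cball (0::real\<times>real) r"
  have Kc: "compact K" "convex K" by (simp_all add: K_def)
  have K0: "0 \<in> K" using r by (simp add: K_def)
  have KU: "K \<subseteq> U" using r0 r by (auto simp: K_def r_def)
  have Ke: "\<forall>q\<in>K. norm q < e" using r e by (auto simp: K_def r_def)
  have bW: "\<forall>z\<in>K. norm (W z) \<le> 2 \<and> snd (W z) \<ge> 1/2"
  proof
    fix z assume z: "z \<in> K"
    have d: "dist z 0 < r1" "dist z 0 < r2" using z r by (auto simp: K_def r_def dist_norm)
    have "\<bar>P z\<bar> < 1/2" using r1(2)[rule_format, OF d(1)] P0 by (simp add: dist_real_def)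
    moreover have "\<bar>Q z - 1\<bar> < 1/2" using r2(2)[rule_format, OF d(2)] Q0 by (simp add: dist_real_def)
    moreover have "norm (W z) \<le> \<bar>P z\<bar> + \<bar>Q z\<bar>" using norm_pair_le by (simp add: W_def)
    ultimately have "norm (W z) \<le> 2 \<and> 1/2 \<le> Q z"
      unfolding abs_less_iff by (cases "P z \<ge> 0"; cases "Q z \<ge> 0") (simp_all add: abs_of_nonneg abs_of_neg)
    then show "norm (W z) \<le> 2 \<and> snd (W z) \<ge> 1/2" by (simp add: W_def)
  qed
  obtain Kc0 where Kc0: "\<forall>q\<in>K. \<bar>c q\<bar> \<le> Kc0"
    using cont_bound[OF Kc(1) continuous_on_subset[OF cc KU]] by blast
  have cG: "continuous_on K (\<lambda>q. \<bar>Bx q\<bar> + \<bar>By q\<bar>)"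
    using continuous_on_subset[OF cBx KU] continuous_on_subset[OF cBy KU]
    by (intro continuous_intros) auto
  obtain G0 where G0: "\<forall>q\<in>K. \<bar>Bx q\<bar> + \<bar>By q\<bar> \<le> G0"
    using cont_bound[OF Kc(1) cG] by auto
  have Kc0p: "Kc0 \<ge> 0" using Kc0 K0 by force
  have G0p: "G0 \<ge> 0" using G0 K0 by force
  define S where "S = K \<inter> {q. r/4 \<le> snd q}"
  have Sc: "compact S" unfolding S_def
    by (intro compact_Int_closed Kc(1) closed_Collect_le continuous_intros)
  have Sne: "(0, r/4) \<in> S" using r by (simp add: S_def K_def norm_Pair)
  have SU: "S \<subseteq> U" using KU by (auto simp: S_def)
  have cS: "continuous_on S (\<lambda>q. \<bar>B q\<bar>)"
    using continuous_on_subset[OF cB SU] by (intro continuous_intros)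
  obtain q0 where q0: "q0 \<in> S" "\<forall>y\<in>S. \<bar>B q0\<bar> \<le> \<bar>B y\<bar>"
    using continuous_attains_inf[OF Sc _ cS] Sne by blast
  define m where "m = \<bar>B q0\<bar>"
  have m: "m > 0"
  proof -
    have "q0 \<in> U" "norm q0 < e" "q0 \<noteq> (0, 0)" using q0 KU Ke r by (auto simp: S_def)
    then have "B q0 \<noteq> 0" using e(2) by (auto simp: B_def dist_norm z0[symmetric])
    then show ?thesis by (simp add: m_def)
  qed
  define \<epsilon> where "\<epsilon> = m / (r * (Kc0 + G0) * exp (Kc0 * r) + 1)"
  have den: "r * (Kc0 + G0) * exp (Kc0 * r) + 1 > 0" 
  proof -
    have "r * (Kc0 + G0) * exp (Kc0 * r) \<ge> 0" using r Kc0p G0p by (intro mult_nonneg_nonneg) auto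
    then show ?thesis by linarith
  qed
  have \<epsilon>: "\<epsilon> > 0" using m den by (simp add: \<epsilon>_def)
  have "uniformly_continuous_on K W" using compact_uniformly_continuous Kc(1) continuous_on_subset[OF cW KU] by blast
  then obtain d1 where d1: "d1 > 0" "\<forall>x\<in>K. \<forall>x'\<in>K. dist x' x < d1 \<longrightarrow> dist (W x') (W x) < \<epsilon>"
    using \<epsilon> unfolding uniformly_continuous_on_def by blast
  have "uniformly_continuous_on K B" using compact_uniformly_continuous Kc(1) continuous_on_subset[OF cB KU] by blast
  then obtain d2 where d2: "d2 > 0" "\<forall>x\<in>K. \<forall>x'\<in>K. dist x' x < d2 \<longrightarrow> dist (B x') (B x) < \<epsilon>"
    using \<epsilon> unfolding uniformly_continuous_on_def by blast
  define \<delta> where "\<delta> = min d1 d2"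
  have \<delta>: "\<delta> > 0" using d1 d2 by (simp add: \<delta>_def)
  obtain n0 :: nat where n0: "r / \<delta> < real n0" using reals_Archimedean2 by blast
  define N where "N = Suc n0"
  define h where "h = r / (2 * real N)"
  have h: "h > 0" using r by (simp add: h_def N_def)
  have Npos: "real N > 0" by (simp add: N_def)
  have Nh: "real N * h = r / 2" using Npos by (simp add: h_def field_simps)
  have h\<delta>: "2 * h < \<delta>"
  proof -
    have "r < \<delta> * real n0" using n0 \<delta> by (simp add: field_simps)
    also have "\<dots> \<le> \<delta> * real N" using \<delta> by (simp add: N_def)
    finally have "r / real N < \<delta>" by (simp add: N_def field_simps)
    then show ?thesis by (simp add: h_def)
  qed
  have st: "\<forall>z\<in>cball 0 r. z + h *\<^sub>R W z \<in> cball 0 r \<longrightarrow>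
      \<bar>B (z + h *\<^sub>R W z) - B z\<bar> \<le> h * (Kc0 * \<bar>B z\<bar> + \<epsilon> * (Kc0 + G0))"
  proof (intro ballI impI)
    fix z assume zK': "z \<in> cball 0 r" and z'K': "z + h *\<^sub>R W z \<in> cball 0 r"
    have zK: "z \<in> K" and z'K: "z + h *\<^sub>R W z \<in> K" using zK' z'K' by (simp_all add: K_def)
    have seg: "\<forall>s\<in>{0..h}. z + s *\<^sub>R W z \<in> K"
    proof
      fix s assume s: "s \<in> {0..h}"
      have "(1 - s/h) *\<^sub>R z + (s/h) *\<^sub>R (z + h *\<^sub>R W z) \<in> K"
        using s h by (intro convexD[OF Kc(2) zK z'K]) auto
      moreover have "(1 - s/h) *\<^sub>R z + (s/h) *\<^sub>R (z + h *\<^sub>R W z) = z + s *\<^sub>R W z"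
        using h by (simp add: algebra_simps)
      ultimately show "z + s *\<^sub>R W z \<in> K" by simp
    qed
    have uc: "\<forall>s\<in>{0..h}. norm (W (z + s *\<^sub>R W z) - W z) \<le> \<epsilon> \<and> \<bar>B (z + s *\<^sub>R W z) - B z\<bar> \<le> \<epsilon>"
    proof
      fix s assume s: "s \<in> {0..h}"
      have "dist (z + s *\<^sub>R W z) z = s * norm (W z)" using s by (simp add: dist_norm)
      also have "\<dots> \<le> h * 2" using s bW zK by (intro mult_mono) auto
      finally have "dist (z + s *\<^sub>R W z) z < \<delta>" using h\<delta> by simp
      then show "norm (W (z + s *\<^sub>R W z) - W z) \<le> \<epsilon> \<and> \<bar>B (z + s *\<^sub>R W z) - B z\<bar> \<le> \<epsilon>"
        using d1(2) d2(2) zK seg s by (auto simp: \<delta>_def dist_norm dist_real_def less_imp_le)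
    qed
    have "\<bar>B (z + h *\<^sub>R W z) - B z\<bar> \<le> h * (Kc0 * (\<bar>B z\<bar> + \<epsilon>) + G0 * \<epsilon>)"
      by (rule step_est[OF h seg _ _ Kc0 G0 uc])
         (use derB KU key in auto)
    then show "\<bar>B (z + h *\<^sub>R W z) - B z\<bar> \<le> h * (Kc0 * \<bar>B z\<bar> + \<epsilon> * (Kc0 + G0))"
      by (simp add: algebra_simps)
  qed
  have C: "\<epsilon> * (Kc0 + G0) \<ge> 0" using \<epsilon> Kc0p G0p by simp
  have bW': "\<forall>z\<in>cball 0 r. norm (W z) \<le> 2 \<and> snd (W z) \<ge> 1/2" using bW by (simp add: K_def)
  have Nr: "2 * real N * h \<le> r" using Nh by simp
  define \<sigma> where "\<sigma> = ((\<lambda>z. z + h *\<^sub>R W z) ^^ N) 0"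
  have it: "norm \<sigma> \<le> 2 * real N * h \<and> snd \<sigma> \<ge> real N * h / 2
     \<and> \<bar>B \<sigma>\<bar> \<le> real N * h * (\<epsilon> * (Kc0 + G0)) * exp (Kc0 * real N * h)"
    unfolding \<sigma>_def by (rule iter_est[OF h Kc0p C bW' st B0 Nr])
  have "\<sigma> \<in> S" using it Nh by (simp add: S_def K_def)
  then have ge: "m \<le> \<bar>B \<sigma>\<bar>" using q0 by (simp add: m_def)
  have "real N * h * (\<epsilon> * (Kc0 + G0)) * exp (Kc0 * real N * h)
      = \<epsilon> * ((r/2) * (Kc0 + G0) * exp (Kc0 * (r/2)))"
  proof -
    have e1: "Kc0 * real N * h = Kc0 * (r/2)" using Nh by (simp add: mult.assoc)
    have "real N * h * (\<epsilon> * (Kc0 + G0)) * exp (Kc0 * real N * h)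
      = (r/2) * (\<epsilon> * (Kc0 + G0)) * exp (Kc0 * (r/2))" by (simp only: e1 Nh)
    then show ?thesis by (simp add: algebra_simps)
  qed
  also have "\<dots> \<le> \<epsilon> * (r * (Kc0 + G0) * exp (Kc0 * r))"
  proof -
    have "exp (Kc0 * (r/2)) \<le> exp (Kc0 * r)" using Kc0p r by (simp add: mult_left_mono)
    then have "(r/2) * (Kc0 + G0) * exp (Kc0 * (r/2)) \<le> r * (Kc0 + G0) * exp (Kc0 * r)"
      using r Kc0p G0p by (intro mult_mono) auto
    then show ?thesis using \<epsilon> by (simp add: mult_left_mono)
  qed
  also have "\<dots> < \<epsilon> * (r * (Kc0 + G0) * exp (Kc0 * r) + 1)" using \<epsilon> by simp
  also have "\<dots> = m" using den by (simp add: \<epsilon>_def)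
  finally show False using it ge by linarith
qed

end
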